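(* Let $\kappa$ be an infinite limit cardinal. Then there exists a connected graph $G$ with $|V_G| = \kappa$ and chromatic number $\chi(G) = \kappa$ such that the complete graph $K_\kappa$ is not a minor of $G$.
   Context: A graph is a pair $G=(V,E)$ with $E \subseteq [V]^2$. $K_\kappa$ is the complete graph $(\kappa,[\kappa]^2)$. The chromatic number $\chi(G)$ is the least cardinal $\mu$ such that there is a map $c:V\to\mu$ with $c(u)\neq c(v)$ whenever $\{u,v\}\in E$. A graph $H$ is a minor of $G$ if there are pairwise disjoint non-empty sets $(X_u)_{u\in V_H}$ of vertices of $G$, each inducing a connected subgraph of $G$, such that for every edge $\{u,v\}$ of $H$ there are $x\in X_u$, $y\in X_v$ with $\{x,y\}$ an edge of $G$. *)

theory Defs
  imports Main
begin

definition graph :: "'a set \<Rightarrow> 'a set set \<Rightarrow> bool" where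
  "graph V E \<longleftrightarrow> E \<subseteq> {e. \<exists>u v. e = {u, v} \<and> u \<noteq> v \<and> u \<in> V \<and> v \<in> V}"

definition connected_on :: "'a set set \<Rightarrow> 'a set \<Rightarrow> bool" where
  "connected_on E X \<longleftrightarrow> X \<noteq> {} \<and>
     (\<forall>x\<in>X. \<forall>y\<in>X. (x, y) \<in> {(u, v). {u, v} \<in> E \<and> u \<in> X \<and> v \<in> X}\<^sup>*)"

definition proper_colouring :: "'a set \<Rightarrow> 'a set set \<Rightarrow> ('a \<Rightarrow> 'c) \<Rightarrow> 'c set \<Rightarrow> bool" where
  "proper_colouring V E c C \<longleftrightarrow> c ` V \<subseteq> C \<and> (\<forall>u v. {u, v} \<in> E \<longrightarrow> c u \<noteq> c v)"

definition chromatic_number_is :: "'a set \<Rightarrow> 'a set set \<Rightarrow> 'c set \<Rightarrow> bool" where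
  "chromatic_number_is V E K \<longleftrightarrow>
     (\<exists>c. proper_colouring V E c K) \<and>
     (\<forall>C :: 'c set. ordLess2 (card_of C) (card_of K) \<longrightarrow> \<not> (\<exists>c. proper_colouring V E c C))"

definition complete_edges :: "'b set \<Rightarrow> 'b set set" where
  "complete_edges K = {e. \<exists>u v. e = {u, v} \<and> u \<noteq> v \<and> u \<in> K \<and> v \<in> K}"

definition is_minor :: "'b set \<Rightarrow> 'b set set \<Rightarrow> 'a set \<Rightarrow> 'a set set \<Rightarrow> bool" where
  "is_minor VH EH VG EG \<longleftrightarrow> (\<exists>X :: 'b \<Rightarrow> 'a set.
     (\<forall>u\<in>VH. X u \<noteq> {} \<and> X u \<subseteq> VG \<and> connected_on EG (X u)) \<and>
     (\<forall>u\<in>VH. \<forall>v\<in>VH. u \<noteq> v \<longrightarrow> X u \<inter> X v = {}) \<and>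
     (\<forall>u v. {u, v} \<in> EH \<longrightarrow> (\<exists>x\<in>X u. \<exists>y\<in>X v. {x, y} \<in> EG)))"

end

theory Submission
  imports Defs
begin
lemma sig_card:
  assumes "infinite K"
  shows "ordIso2 (card_of (Sigma K (underS (card_of K)))) (card_of K)"
proof -
  let ?R = "card_of K"
  have F[simp]: "Field ?R = K" by (rule Field_card_of)
  have le1: "ordLeq2 (card_of (Sigma K (underS ?R))) (card_of K)"
  proof -
    have "Sigma K (underS ?R) \<subseteq> K \<times> K" by (fastforce dest: underS_Field)
    hence "ordLeq2 (card_of (Sigma K (underS ?R))) (card_of (K \<times> K))" by (rule card_of_mono1)
    thus ?thesis using card_of_Times_same_infinite[OF assms] ordLeq_ordIso_trans by blast
  qed
  define g where "g a = (SOME b. b \<in> K \<and> a \<noteq> b \<and> (a,b) \<in> ?R)" for a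
  have g: "g a \<in> K \<and> a \<noteq> g a \<and> (a, g a) \<in> ?R" if "a \<in> K" for a
  proof -
    have "\<exists>b \<in> Field ?R. a \<noteq> b \<and> (a,b) \<in> ?R"
      using infinite_Card_order_limit[of "card_of K" a] card_of_Card_order[of K] assms that by simp
    then obtain b where "b \<in> K \<and> a \<noteq> b \<and> (a,b) \<in> ?R" by auto
    thus ?thesis unfolding g_def by (rule someI)
  qed
  have le2: "ordLeq2 (card_of K) (card_of (Sigma K (underS ?R)))"
  proof (rule card_of_ordLeqI[where f = "\<lambda>a. (g a, a)"])
    show "inj_on (\<lambda>a. (g a, a)) K" by (auto simp: inj_on_def)
    fix a assume "a \<in> K" thus "(g a, a) \<in> Sigma K (underS ?R)"
      using g[of a] by (auto simp: underS_def)
  qed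
  show ?thesis using le1 le2 ordIso_iff_ordLeq by blast
qed

lemma big_segment:
  assumes "ordLess2 (card_of B) (card_of K)"
  shows "\<exists>a\<in>K. ordLeq2 (card_of B) (card_of (underS (card_of K) a))"
proof -
  let ?R = "card_of K"
  have W: "Well_order ?R" by (rule card_of_Well_order)
  obtain a where a: "a \<in> Field ?R" and iso: "ordIso2 (card_of B) (Restr ?R (underS ?R a))"
    using ordLess_iff_ordIso_Restr[OF W card_of_Well_order[of B]] assms by blast
  have aK: "a \<in> K" using a by (simp add: Field_card_of)
  have FR: "Field (Restr ?R (underS ?R a)) = underS ?R a"
    using W wo_rel.underS_ofilter Field_Restr_ofilter unfolding wo_rel_def by fastforce
  have "ordIso2 (card_of (Field (card_of B))) (card_of (Field (Restr ?R (underS ?R a))))"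
    using iso by (rule card_of_cong)
  hence "ordIso2 (card_of B) (card_of (underS ?R a))" using FR by (simp add: Field_card_of)
  thus ?thesis using aK ordIso_iff_ordLeq by blast
qed

theorem mainTheorem1:
  fixes K :: "'a set"
  assumes "infinite K"
    and "\<forall>A\<subseteq>K. ordLess2 (card_of A) (card_of K) \<longrightarrow>
           (\<exists>B\<subseteq>K. ordLess2 (card_of A) (card_of B) \<and> ordLess2 (card_of B) (card_of K))"
  shows "\<exists>E. graph K E \<and> connected_on E K \<and> chromatic_number_is K E K \<and>
             \<not> is_minor K (complete_edges K) K E"
proof -
  let ?R = "card_of K"
  let ?S = "Sigma K (underS ?R)"
  have inf: "infinite K" by fact
  obtain r0 where r0: "r0 \<in> K" using inf by (metis finite.emptyI ex_in_conv)
  obtain h where "bij_betw h K (K - {r0})" using infinite_imp_bij_betw[OF inf] by blast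
  hence "ordIso2 (card_of (K - {r0})) (card_of K)"
    using card_of_ordIsoI ordIso_symmetric by blast
  hence "ordIso2 (card_of (K - {r0})) (card_of ?S)"
    using sig_card[OF inf] ordIso_symmetric ordIso_transitive by blast
  then obtain f where f: "bij_betw f (K - {r0}) ?S" using card_of_ordIso by blast
  define cl where "cl v = fst (f v)" for v
  define E where "E = {{r0, v} | v. v \<in> K \<and> v \<noteq> r0} \<union>
     {{u, v} | u v. u \<in> K - {r0} \<and> v \<in> K - {r0} \<and> u \<noteq> v \<and> cl u = cl v}"
  have Eout: "x \<noteq> y \<and> x \<in> K \<and> y \<in> K \<and> (x = r0 \<or> y = r0 \<or> cl x = cl y)" if "{x, y} \<in> E" for x y
    using that r0 unfolding E_def by (auto simp: doubleton_eq_iff)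
  have Ein1: "{r0, v} \<in> E" if "v \<in> K" "v \<noteq> r0" for v
    using that unfolding E_def by blast
  have Ein2: "{u, v} \<in> E" if "u \<in> K - {r0}" "v \<in> K - {r0}" "u \<noteq> v" "cl u = cl v" for u v
    using that unfolding E_def by blast
  have clK: "cl v \<in> K" if "v \<in> K - {r0}" for v
  proof -
    have "f v \<in> ?S" using f that unfolding bij_betw_def by blast
    thus ?thesis unfolding cl_def by (auto simp: mem_Sigma_iff)
  qed
  define Q where "Q a = {v \<in> K - {r0}. cl v = a}" for a
  have Qle: "ordLeq2 (card_of (Q a)) (card_of (underS ?R a))" for a
  proof (rule card_of_ordLeqI[where f = "\<lambda>v. snd (f v)"])
    show "inj_on (\<lambda>v. snd (f v)) (Q a)"
    proof (rule inj_onI)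
      fix u v assume "u \<in> Q a" "v \<in> Q a" "snd (f u) = snd (f v)"
      hence "f u = f v" unfolding Q_def cl_def by (simp add: prod_eq_iff)
      thus "u = v" using f \<open>u \<in> Q a\<close> \<open>v \<in> Q a\<close> unfolding bij_betw_def inj_on_def Q_def by blast
    qed
    fix v assume "v \<in> Q a"
    hence "f v \<in> ?S" "fst (f v) = a" using f unfolding Q_def cl_def bij_betw_def by auto
    thus "snd (f v) \<in> underS ?R a" by auto
  qed
  have Qge: "ordLeq2 (card_of (underS ?R a)) (card_of (Q a))" if "a \<in> K" for a
  proof (rule card_of_ordLeqI[where f = "\<lambda>b. inv_into (K - {r0}) f (a, b)"])
    have bi: "bij_betw (inv_into (K - {r0}) f) ?S (K - {r0})" using f by (rule bij_betw_inv_into)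
    show "inj_on (\<lambda>b. inv_into (K - {r0}) f (a, b)) (underS ?R a)"
    proof (rule inj_onI)
      fix b c assume "b \<in> underS ?R a" "c \<in> underS ?R a"
        "inv_into (K - {r0}) f (a, b) = inv_into (K - {r0}) f (a, c)"
      thus "b = c" using bi that unfolding bij_betw_def inj_on_def by auto
    qed
    fix b assume b: "b \<in> underS ?R a"
    hence "(a, b) \<in> ?S" using that by auto
    hence "inv_into (K - {r0}) f (a, b) \<in> K - {r0}" "f (inv_into (K - {r0}) f (a, b)) = (a, b)"
      using bi f unfolding bij_betw_def by (auto simp: f_inv_into_f)
    thus "inv_into (K - {r0}) f (a, b) \<in> Q a" unfolding Q_def cl_def by auto
  qed
  have Qless: "ordLess2 (card_of (Q a)) (card_of K)" if "a \<in> K" for a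
    using Qle[of a] card_of_underS[OF card_of_Card_order, of a K] that ordLeq_ordLess_trans
    by (fastforce simp: Field_card_of)
  have graph: "graph K E"
    unfolding graph_def E_def using r0 by auto
  have conn: "connected_on E K"
  proof -
    let ?rel = "{(u, v). {u, v} \<in> E \<and> u \<in> K \<and> v \<in> K}"
    have tor: "(x, r0) \<in> ?rel\<^sup>*" if "x \<in> K" for x
    proof (cases "x = r0")
      case False
      hence "{x, r0} \<in> E" using Ein1[OF that False] by (simp add: insert_commute)
      thus ?thesis using that r0 by blast
    qed simp
    have fromr: "(r0, x) \<in> ?rel\<^sup>*" if "x \<in> K" for x
    proof (cases "x = r0")
      case False
      thus ?thesis using Ein1[OF that False] that r0 by blast
    qed simp
    show ?thesis unfolding connected_on_def
      using r0 tor fromr rtrancl_trans by fastforce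
  qed
  have chrom: "chromatic_number_is K E K"
    unfolding chromatic_number_is_def
  proof (intro conjI allI impI notI)
    show "\<exists>c. proper_colouring K E c K"
      by (rule exI[of _ id]) (auto simp: proper_colouring_def dest: Eout)
  next
    fix C :: "'a set"
    assume C: "ordLess2 (card_of C) (card_of K)" and "\<exists>c. proper_colouring K E c C"
    then obtain c where c: "proper_colouring K E c C" by blast
    obtain A where A: "A \<subseteq> K" "ordIso2 (card_of C) (card_of A)" "ordLess2 (card_of A) (card_of K)"
      using C internalize_card_of_ordLess[of C ?R] by (auto simp: Field_card_of)
    obtain B where B: "B \<subseteq> K" "ordLess2 (card_of A) (card_of B)" "ordLess2 (card_of B) (card_of K)"
      using assms(2) A by blast
    obtain a where a: "a \<in> K" "ordLeq2 (card_of B) (card_of (underS ?R a))"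
      using big_segment[OF B(3)] by blast
    have "ordLess2 (card_of C) (card_of (Q a))"
      using A(2) B(2) a(2) Qge[OF a(1)]
      by (meson ordIso_ordLess_trans ordLess_ordLeq_trans)
    moreover have "ordLeq2 (card_of (Q a)) (card_of C)"
    proof (rule card_of_ordLeqI[where f = c])
      show "inj_on c (Q a)"
      proof (rule inj_onI, rule ccontr)
        fix u v assume "u \<in> Q a" "v \<in> Q a" "c u = c v" "u \<noteq> v"
        hence "{u, v} \<in> E" using Ein2 unfolding Q_def by auto
        thus False using c \<open>c u = c v\<close> unfolding proper_colouring_def by blast
      qed
      fix v assume "v \<in> Q a" thus "c v \<in> C" using c unfolding proper_colouring_def Q_def by auto
    qed
    ultimately show False using not_ordLess_ordLeq by blast
  qed
  have nominor: "\<not> is_minor K (complete_edges K) K E"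
  proof
    assume "is_minor K (complete_edges K) K E"
    then obtain X where X1: "\<forall>u\<in>K. X u \<noteq> {} \<and> X u \<subseteq> K \<and> connected_on E (X u)"
      and X2: "\<forall>u\<in>K. \<forall>v\<in>K. u \<noteq> v \<longrightarrow> X u \<inter> X v = {}"
      and X3: "\<forall>u v. {u, v} \<in> complete_edges K \<longrightarrow> (\<exists>x\<in>X u. \<exists>y\<in>X v. {x, y} \<in> E)"
      unfolding is_minor_def by blast
    define U where "U = {u \<in> K. r0 \<notin> X u}"
    have Ubig: "ordLeq2 (card_of K) (card_of U)"
    proof (cases "\<exists>u0\<in>K. r0 \<in> X u0")
      case True
      then obtain u0 where u0: "u0 \<in> K" "r0 \<in> X u0" by blast
      have "K - {u0} \<subseteq> U" using X2 u0 unfolding U_def by blast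
      moreover obtain h where "bij_betw h K (K - {u0})" using infinite_imp_bij_betw[OF inf] by blast
      ultimately show ?thesis using card_of_ordIsoI card_of_mono1 ordIso_ordLeq_trans by blast
    next
      case False
      hence "U = K" unfolding U_def by blast
      thus ?thesis using card_of_refl ordIso_iff_ordLeq by blast
    qed
    have sub: "X u \<subseteq> K - {r0}" if "u \<in> U" for u using that X1 unfolding U_def by blast
    have samecl: "cl x = cl y" if u: "u \<in> U" and x: "x \<in> X u" and y: "y \<in> X u" for u x y
    proof -
      let ?rel = "{(a, b). {a, b} \<in> E \<and> a \<in> X u \<and> b \<in> X u}"
      have "(x, y) \<in> ?rel\<^sup>*" using X1 u x y unfolding connected_on_def U_def by blast
      thus ?thesis
      proof (induction rule: rtrancl_induct)
        case (step b d)
        hence "{b, d} \<in> E" "b \<in> X u" "d \<in> X u" by auto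
        hence "cl b = cl d" using Eout[of b d] sub[OF u] by blast
        thus ?case using step by simp
      qed simp
    qed
    define p where "p u = (SOME x. x \<in> X u)" for u
    have pX: "p u \<in> X u" if "u \<in> K" for u
      unfolding p_def using X1 that by (metis some_in_eq)
    obtain u1 where u1: "u1 \<in> U"
      using Ubig inf by (metis card_of_ordLeq_infinite finite.emptyI ex_in_conv)
    define a where "a = cl (p u1)"
    have U_K: "U \<subseteq> K" unfolding U_def by blast
    have pQ: "p u \<in> Q a" if "u \<in> U" for u
    proof -
      have pu: "p u \<in> K - {r0}" using pX sub that U_K by blast
      have "cl (p u) = cl (p u1)"
      proof (cases "u = u1")
        case False
        hence "{u, u1} \<in> complete_edges K" using that u1 U_K unfolding complete_edges_def by blast
        then obtain x y where xy: "x \<in> X u" "y \<in> X u1" "{x, y} \<in> E" using X3 by blast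
        have "x \<noteq> r0" "y \<noteq> r0" using xy sub that u1 by auto
        hence "cl x = cl y" using Eout[OF xy(3)] by blast
        moreover have "cl x = cl (p u)" using samecl[OF that xy(1) pX[of u]] that U_K by blast
        moreover have "cl y = cl (p u1)" using samecl[OF u1 xy(2) pX[of u1]] u1 U_K by blast
        ultimately show ?thesis by simp
      qed simp
      thus ?thesis using pu unfolding Q_def a_def by simp
    qed
    have "inj_on p U"
    proof (rule inj_onI, rule ccontr)
      fix u v assume "u \<in> U" "v \<in> U" "p u = p v" "u \<noteq> v"
      hence "u \<in> K" "v \<in> K" using U_K by auto
      hence "p u \<in> X u \<inter> X v" using pX \<open>p u = p v\<close> by (metis IntI)
      thus False using X2 \<open>u \<in> K\<close> \<open>v \<in> K\<close> \<open>u \<noteq> v\<close> by blast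
    qed
    hence "ordLeq2 (card_of U) (card_of (Q a))" using pQ card_of_ordLeqI by blast
    moreover have "a \<in> K" unfolding a_def using clK pX sub u1 U_K by blast
    ultimately have "ordLess2 (card_of U) (card_of K)" using Qless ordLeq_ordLess_trans by blast
    thus False using Ubig not_ordLess_ordLeq by blast
  qed
  show ?thesis using graph conn chrom nominor by blast
qed
end
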